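(* Let $\mathcal Y$ be a finite set, let $R$ be a probability measure on $\mathcal Y$ with $r(y)=R(\{y\})>0$ for all $y$, and let $p,q:\mathcal Y\to(0,\infty)$ be the densities with respect to $R$ of probability measures $P,Q$ on $\mathcal Y$. For $\gamma\notin\{0,-1\}$ define $$D_\gamma(P,Q;R)=-\frac1\gamma\frac{\sum_{y} p(y)q(y)^\gamma r(y)}{\big(\sum_y q(y)^{\gamma+1}r(y)\big)^{\gamma/(\gamma+1)}}+\frac1\gamma\Big(\sum_y p(y)^{\gamma+1}r(y)\Big)^{1/(\gamma+1)},$$ and define the GM-divergence $$D_{\rm GM}(P,Q;R)=\Big(\sum_y\frac{p(y)}{q(y)}r(y)\Big)\exp\Big\{\sum_y r(y)\log q(y)\Big\}-\exp\Big\{\sum_y r(y)\log p(y)\Big\}.$$ Then $\lim_{\gamma\to-1}D_\gamma(P,Q;R)=D_{\rm GM}(P,Q;R)$. *)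

theory Defs
  imports "HOL-Analysis.Analysis"
begin

definition gamma_div :: "'a set \<Rightarrow> ('a \<Rightarrow> real) \<Rightarrow> ('a \<Rightarrow> real) \<Rightarrow> ('a \<Rightarrow> real) \<Rightarrow> real \<Rightarrow> real" where
  "gamma_div Y r p q \<gamma> =
     - (1 / \<gamma>) * (\<Sum>y\<in>Y. p y * q y powr \<gamma> * r y)
         / (\<Sum>y\<in>Y. q y powr (\<gamma> + 1) * r y) powr (\<gamma> / (\<gamma> + 1))
     + (1 / \<gamma>) * (\<Sum>y\<in>Y. p y powr (\<gamma> + 1) * r y) powr (1 / (\<gamma> + 1))"

definition GM_div :: "'a set \<Rightarrow> ('a \<Rightarrow> real) \<Rightarrow> ('a \<Rightarrow> real) \<Rightarrow> ('a \<Rightarrow> real) \<Rightarrow> real" where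
  "GM_div Y r p q =
     (\<Sum>y\<in>Y. p y / q y * r y) * exp (\<Sum>y\<in>Y. r y * ln (q y))
     - exp (\<Sum>y\<in>Y. r y * ln (p y))"

end

theory Submission
  imports Defs
begin

lemma key_lim:
  fixes Y :: "'a set" and r f :: "'a \<Rightarrow> real"
  assumes fin: "finite Y" and rpos: "\<And>y. y \<in> Y \<Longrightarrow> r y > 0" and rs: "(\<Sum>y\<in>Y. r y) = 1"
    and fpos: "\<And>y. y \<in> Y \<Longrightarrow> f y > 0"
  shows "((\<lambda>g. (\<Sum>y\<in>Y. f y powr (g + 1) * r y) powr (1 / (g + 1))) \<longlongrightarrow> exp (\<Sum>y\<in>Y. r y * ln (f y))) (at (-1))"
proof -
  define S where "S = (\<lambda>g. \<Sum>y\<in>Y. f y powr (g + 1) * r y)"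
  have Yne: "Y \<noteq> {}" using rs by auto
  have Spos: "S g > 0" for g unfolding S_def
    using fin Yne by (intro sum_pos mult_pos_pos) (auto dest: fpos rpos simp: rpos)
  have "S (-1) = (\<Sum>y\<in>Y. r y)" unfolding S_def by (rule sum.cong) (auto dest: fpos)
  then have S1: "S (-1) = 1" using rs by simp
  have dS: "(S has_field_derivative (\<Sum>y\<in>Y. ln (f y) * f y powr (g + 1) * r y)) (at g)" for g
    unfolding S_def
    by (rule DERIV_sum) (auto intro!: derivative_eq_intros simp: fpos)
  have dlS: "((\<lambda>g. ln (S g)) has_field_derivative (\<Sum>y\<in>Y. ln (f y) * f y powr (-1 + 1) * r y) / S (-1)) (at (-1))"
    using dS[of "-1"] Spos by (auto intro!: derivative_eq_intros)
  have val: "(\<Sum>y\<in>Y. ln (f y) * f y powr (-1 + 1) * r y) / S (-1) = (\<Sum>y\<in>Y. r y * ln (f y))"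
    using S1 fpos by (auto intro!: sum.cong dest: fpos)
  have "((\<lambda>g. (ln (S g) - ln (S (-1))) / (g - (-1))) \<longlongrightarrow> (\<Sum>y\<in>Y. r y * ln (f y))) (at (-1))"
    using dlS unfolding val has_field_derivative_iff by simp
  then have "((\<lambda>g. ln (S g) / (g + 1)) \<longlongrightarrow> (\<Sum>y\<in>Y. r y * ln (f y))) (at (-1))"
    using S1 by simp
  then have "((\<lambda>g. exp (ln (S g) / (g + 1))) \<longlongrightarrow> exp (\<Sum>y\<in>Y. r y * ln (f y))) (at (-1))"
    by (rule tendsto_exp)
  moreover have "exp (ln (S g) / (g + 1)) = S g powr (1 / (g + 1))" for g
    using Spos[of g] by (simp add: powr_def)
  ultimately show ?thesis unfolding S_def by simp
qed

theorem mainTheorem3: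
  fixes Y :: "'a set" and r p q :: "'a \<Rightarrow> real"
  assumes "finite Y"
    and "\<And>y. y \<in> Y \<Longrightarrow> r y > 0" and "(\<Sum>y\<in>Y. r y) = 1"
    and "\<And>y. y \<in> Y \<Longrightarrow> p y > 0" and "(\<Sum>y\<in>Y. p y * r y) = 1"
    and "\<And>y. y \<in> Y \<Longrightarrow> q y > 0" and "(\<Sum>y\<in>Y. q y * r y) = 1"
  shows "((\<lambda>\<gamma>. gamma_div Y r p q \<gamma>) \<longlongrightarrow> GM_div Y r p q) (at (-1))"
proof -
  note fin = assms(1) and rpos = assms(2) and rs = assms(3) and ppos = assms(4) and qpos = assms(6)
  define A where "A = (\<lambda>g. \<Sum>y\<in>Y. p y * q y powr g * r y)"
  define B where "B = (\<lambda>g. \<Sum>y\<in>Y. q y powr (g + 1) * r y)"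
  define C where "C = (\<lambda>g. \<Sum>y\<in>Y. p y powr (g + 1) * r y)"
  have Yne: "Y \<noteq> {}" using rs by auto
  have Bpos: "B g > 0" for g unfolding B_def
    using fin Yne by (intro sum_pos mult_pos_pos) (auto dest: qpos rpos simp: rpos)
  have eq: "gamma_div Y r p q g = - (1 / g) * A g * B g powr (1 / (g + 1)) / B g
      + (1 / g) * C g powr (1 / (g + 1))" if "g \<noteq> -1" for g
  proof -
    have "g / (g + 1) = 1 - 1 / (g + 1)" using that by (simp add: field_simps)
    then have "B g powr (g / (g + 1)) = B g / B g powr (1 / (g + 1))"
      using Bpos[of g] by (simp add: powr_diff)
    then show ?thesis unfolding gamma_div_def
      by (simp add: A_def B_def C_def)
  qed
  have lA: "(A \<longlongrightarrow> A (-1)) (at (-1))" unfolding A_def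
    by (intro tendsto_intros) (auto dest: qpos)
  have lB: "(B \<longlongrightarrow> B (-1)) (at (-1))" unfolding B_def
    by (intro tendsto_intros) (auto dest: qpos)
  have "B (-1) = (\<Sum>y\<in>Y. r y)" unfolding B_def by (rule sum.cong) (auto dest: qpos)
  then have B1: "B (-1) = 1" using rs by simp
  have A1: "A (-1) = (\<Sum>y\<in>Y. p y / q y * r y)" unfolding A_def
    using qpos by (auto intro!: sum.cong simp: powr_minus_divide dest: qpos)
  have lBp: "((\<lambda>g. B g powr (1 / (g + 1))) \<longlongrightarrow> exp (\<Sum>y\<in>Y. r y * ln (q y))) (at (-1))"
    unfolding B_def by (rule key_lim[OF fin rpos rs qpos])
  have lCp: "((\<lambda>g. C g powr (1 / (g + 1))) \<longlongrightarrow> exp (\<Sum>y\<in>Y. r y * ln (p y))) (at (-1))"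
    unfolding C_def by (rule key_lim[OF fin rpos rs ppos])
  have lg: "((\<lambda>g::real. 1 / g) \<longlongrightarrow> 1 / (-1)) (at (-1))"
    by (intro tendsto_intros) auto
  have "((\<lambda>g. - (1 / g) * A g * B g powr (1 / (g + 1)) / B g
      + (1 / g) * C g powr (1 / (g + 1))) \<longlongrightarrow>
      - (1 / (-1)) * A (-1) * exp (\<Sum>y\<in>Y. r y * ln (q y)) / B (-1)
      + (1 / (-1)) * exp (\<Sum>y\<in>Y. r y * ln (p y))) (at (-1))"
    by (intro tendsto_intros lA lB lBp lCp lg) (simp add: B1)
  then have "((\<lambda>g. - (1 / g) * A g * B g powr (1 / (g + 1)) / B g
      + (1 / g) * C g powr (1 / (g + 1))) \<longlongrightarrow> GM_div Y r p q) (at (-1))"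
    unfolding GM_div_def A1 B1 by simp
  moreover have "\<forall>\<^sub>F g in at (-1). - (1 / g) * A g * B g powr (1 / (g + 1)) / B g
      + (1 / g) * C g powr (1 / (g + 1)) = gamma_div Y r p q g"
    unfolding eventually_at_filter by (auto simp: eq)
  ultimately show ?thesis by (rule Lim_transform_eventually)
qed

end
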